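(* Let $F:\mathbb{R}^d\to\mathbb{R}$ be any differentiable function. Suppose that for all $t\ge1$, $\mathbb{E}[g_t\mid\mathcal{F}_t]=\nabla F(x_t)$, $\|g_t\|\le G$ almost surely, and the learning rate $\eta_t$ is a non-negative $\mathcal{F}_t$-measurable random variable. Assume the regularizers $\phi_1,\phi_2,\dots$ are convex and differentiable, the minimizers defining $x_t$ exist, $\phi_1$ attains its minimum, all expectations below are finite, and for all $t\ge1$ $$H_t(x_t)-H_{t+1}(x_{t+1})+\langle\ell_t,x_t\rangle\le0 .$$ Then FTRL with rescaled gradients satisfies for all $T\ge0$ and all $u\in\mathbb{R}^d$: $$\mathbb{E}[B_{\phi_{T+1}}(u,x_{T+1})]+\sum_{t=1}^T\mathbb{E}\big[\eta_t\langle\nabla F(x_t),x_t-u\rangle\big]\le \mathbb{E}[\phi_{T+1}(u)]-\min_{x\in\mathbb{R}^d}\phi_1(x).$$ In particular $\sum_{t=1}^T\mathbb{E}[\eta_t\langle\nabla F(x_t),x_t-u\rangle]\le\mathbb{E}[\phi_{T+1}(u)]-\min_x\phi_1(x)$, and if there exists $x^*$ with $\langle\nabla F(x),x-x^*\rangle\ge0$ for all $x\in\mathbb{R}^d$, then $\mathbb{E}[B_{\phi_{T+1}}(x^*,x_{T+1})]\le\mathbb{E}[\phi_{T+1}(x^* )]-\min_x\phi_1(x)$.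
   Context: $\|\cdot\|$ is the Euclidean norm, $G>0$. Iterates $x_1,x_2,\dots$ and random vectors $g_t$ (received after $x_t$); $\mathcal{F}_t$ is the $\sigma$-algebra generated by $x_1,\dots,x_t,g_1,\dots,g_{t-1}$. For differentiable $f$, $B_f(x,y)=f(x)-f(y)-\langle\nabla f(y),x-y\rangle$. FTRL with rescaled gradients (initial point $0$): given regularizers $\phi_t:\mathbb{R}^d\to\mathbb{R}$ ($\phi_t$ and $\eta_t$ may depend on $g_1,\dots,g_{t-1}$, i.e. are $\mathcal{F}_t$-measurable), set $\theta_0=0$; for $t=1,2,\dots$: $x_t\in\arg\min_{x}H_t(x)$ where $H_t(x)=\phi_t(x)-\langle\theta_{t-1},x\rangle$; receive $g_t$; $\ell_t=\eta_tg_t$; $\theta_t=\theta_{t-1}-\ell_t$. *)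

theory Defs
  imports "HOL-Analysis.Analysis" "HOL-Probability.Probability"
begin

text \<open>Bregman divergence B_f(x,y) = f x - f y - <grad f(y), x - y>, written with the
  Frechet derivative of f at y (which is the linear map h |-> <grad f(y), h>).\<close>
definition bregman :: "('v::real_normed_vector \<Rightarrow> real) \<Rightarrow> 'v \<Rightarrow> 'v \<Rightarrow> real" where
  "bregman f x y = f x - f y - frechet_derivative f (at y) (x - y)"

definition ftrl_filtration ::
  "'a measure \<Rightarrow> (nat \<Rightarrow> 'a \<Rightarrow> real^'d) \<Rightarrow> (nat \<Rightarrow> 'a \<Rightarrow> real^'d) \<Rightarrow> nat \<Rightarrow> 'a measure" where
  "ftrl_filtration M x g t = sigma (space M)
     ({x s -` A \<inter> space M | s A. s \<in> {1..t} \<and> A \<in> sets borel} \<union>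
      {g s -` A \<inter> space M | s A. s \<in> {1..<t} \<and> A \<in> sets borel})"

definition ftrl_theta ::
  "(nat \<Rightarrow> 'a \<Rightarrow> real) \<Rightarrow> (nat \<Rightarrow> 'a \<Rightarrow> real^'d) \<Rightarrow> nat \<Rightarrow> 'a \<Rightarrow> real^'d" where
  "ftrl_theta eta g t \<omega> = - (\<Sum>s\<in>{1..t}. eta s \<omega> *\<^sub>R g s \<omega>)"

definition ftrl_H ::
  "(nat \<Rightarrow> 'a \<Rightarrow> real^'d \<Rightarrow> real) \<Rightarrow> (nat \<Rightarrow> 'a \<Rightarrow> real) \<Rightarrow> (nat \<Rightarrow> 'a \<Rightarrow> real^'d)
    \<Rightarrow> nat \<Rightarrow> 'a \<Rightarrow> real^'d \<Rightarrow> real" where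
  "ftrl_H phi eta g t \<omega> y = phi t \<omega> y - inner (ftrl_theta eta g (t - 1) \<omega>) y"

end

theory Submission imports Defs begin

lemma vec_nth_borel[measurable]: "(\<lambda>x::real^'d. x $ i) \<in> borel_measurable borel"
  by (intro borel_measurable_continuous_onI continuous_intros)

lemma key_cond:
  fixes M F :: "'a measure" and f g h :: "'a \<Rightarrow> real^'d"
  assumes P: "prob_space M" and sub: "subalgebra M F"
    and fF[measurable]: "f \<in> borel_measurable F" and gM[measurable]: "g \<in> borel_measurable M"
    and gb: "AE \<omega> in M. norm (g \<omega>) \<le> G"
    and ce: "\<And>i. AE \<omega> in M. real_cond_exp M F (\<lambda>\<omega>. g \<omega> $ i) \<omega> = h \<omega> $ i"
    and ig: "integrable M (\<lambda>\<omega>. inner (f \<omega>) (g \<omega>))"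
    and ih: "integrable M (\<lambda>\<omega>. inner (f \<omega>) (h \<omega>))"
  shows "integral\<^sup>L M (\<lambda>\<omega>. inner (f \<omega>) (g \<omega>)) = integral\<^sup>L M (\<lambda>\<omega>. inner (f \<omega>) (h \<omega>))"
proof -
  interpret prob_space M by (rule P)
  interpret finite_measure_subalgebra M F
    by unfold_locales (rule sub)
  have fM[measurable]: "f \<in> borel_measurable M" by (rule measurable_from_subalg[OF sub fF])
  have spF: "space F = space M" using sub by (simp add: subalgebra_def)
  define A where "A n = {\<omega>\<in>space M. norm (f \<omega>) \<le> real n}" for n :: nat
  have AF[measurable]: "A n \<in> sets F" for n
  proof -
    have "{\<omega>\<in>space F. norm (f \<omega>) \<le> real n} \<in> sets F" by measurable
    then show ?thesis by (simp add: A_def spF)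
  qed
  have AM[measurable]: "A n \<in> sets M" for n using AF sub by (auto simp: subalgebra_def)
  have ihm[measurable]: "(\<lambda>\<omega>. inner (f \<omega>) (h \<omega>)) \<in> borel_measurable M" using ih by auto
  have eqn: "integral\<^sup>L M (\<lambda>\<omega>. indicator (A n) \<omega> * inner (f \<omega>) (g \<omega>))
           = integral\<^sup>L M (\<lambda>\<omega>. indicator (A n) \<omega> * inner (f \<omega>) (h \<omega>))" for n
  proof -
    define k where "k i \<omega> = indicator (A n) \<omega> * f \<omega> $ i" for i \<omega>
    have kF[measurable]: "k i \<in> borel_measurable F" for i unfolding k_def by measurable
    have kM[measurable]: "k i \<in> borel_measurable M" for i
      by (rule measurable_from_subalg[OF sub kF])
    have kb: "norm (k i \<omega>) \<le> real n" for i \<omega>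
      unfolding k_def using component_le_norm_cart[of "f \<omega>" i]
      by (auto simp: A_def indicator_def)
    have int_kg: "integrable M (\<lambda>\<omega>. k i \<omega> * g \<omega> $ i)" for i
    proof (rule integrable_const_bound[where B="real n * G"])
      show "AE \<omega> in M. norm (k i \<omega> * g \<omega> $ i) \<le> real n * G"
        using gb
      proof eventually_elim
        case (elim \<omega>)
        have "norm (k i \<omega> * g \<omega> $ i) = norm (k i \<omega>) * norm (g \<omega> $ i)" by (simp add: abs_mult)
        also have "\<dots> \<le> real n * G"
          using kb[of i \<omega>] component_le_norm_cart[of "g \<omega>" i] elim
          by (intro mult_mono) auto
        finally show ?case .
      qed
    qed measurable
    have ci: "integrable M (\<lambda>\<omega>. k i \<omega> * real_cond_exp M F (\<lambda>\<omega>. g \<omega> $ i) \<omega>)"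
      "integral\<^sup>L M (\<lambda>\<omega>. k i \<omega> * real_cond_exp M F (\<lambda>\<omega>. g \<omega> $ i) \<omega>)
         = integral\<^sup>L M (\<lambda>\<omega>. k i \<omega> * g \<omega> $ i)" for i
      using real_cond_exp_intg[OF int_kg kF] by auto
    have "integral\<^sup>L M (\<lambda>\<omega>. indicator (A n) \<omega> * inner (f \<omega>) (g \<omega>))
        = integral\<^sup>L M (\<lambda>\<omega>. \<Sum>i\<in>UNIV. k i \<omega> * g \<omega> $ i)"
      by (intro Bochner_Integration.integral_cong refl) (auto simp: k_def inner_vec_def sum_distrib_left mult.assoc)
    also have "\<dots> = (\<Sum>i\<in>UNIV. integral\<^sup>L M (\<lambda>\<omega>. k i \<omega> * g \<omega> $ i))"
      by (rule Bochner_Integration.integral_sum) (use int_kg in auto)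
    also have "\<dots> = (\<Sum>i\<in>UNIV. integral\<^sup>L M (\<lambda>\<omega>. k i \<omega> * real_cond_exp M F (\<lambda>\<omega>. g \<omega> $ i) \<omega>))"
      using ci(2) by simp
    also have "\<dots> = integral\<^sup>L M (\<lambda>\<omega>. \<Sum>i\<in>UNIV. k i \<omega> * real_cond_exp M F (\<lambda>\<omega>. g \<omega> $ i) \<omega>)"
      by (rule Bochner_Integration.integral_sum[symmetric]) (use ci(1) in auto)
    also have "\<dots> = integral\<^sup>L M (\<lambda>\<omega>. indicator (A n) \<omega> * inner (f \<omega>) (h \<omega>))"
    proof (rule integral_cong_AE)
      show "(\<lambda>\<omega>. \<Sum>i\<in>UNIV. k i \<omega> * real_cond_exp M F (\<lambda>\<omega>. g \<omega> $ i) \<omega>) \<in> borel_measurable M"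
        by measurable
      show "(\<lambda>\<omega>. indicator (A n) \<omega> * inner (f \<omega>) (h \<omega>)) \<in> borel_measurable M"
        by measurable
      have "AE \<omega> in M. \<forall>i. real_cond_exp M F (\<lambda>\<omega>. g \<omega> $ i) \<omega> = h \<omega> $ i"
        using ce by (simp add: AE_all_countable)
      then show "AE \<omega> in M. (\<Sum>i\<in>UNIV. k i \<omega> * real_cond_exp M F (\<lambda>\<omega>. g \<omega> $ i) \<omega>)
           = indicator (A n) \<omega> * inner (f \<omega>) (h \<omega>)"
        by eventually_elim (auto simp: k_def inner_vec_def sum_distrib_left mult.assoc)
    qed
    finally show ?thesis .
  qed
  have lim: "(\<lambda>n. integral\<^sup>L M (\<lambda>\<omega>. indicator (A n) \<omega> * inner (f \<omega>) (q \<omega>)))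
      \<longlonglongrightarrow> integral\<^sup>L M (\<lambda>\<omega>. inner (f \<omega>) (q \<omega>))"
    if iq: "integrable M (\<lambda>\<omega>. inner (f \<omega>) (q \<omega>))" for q :: "'a \<Rightarrow> real^'d"
  proof -
    have [measurable]: "(\<lambda>\<omega>. inner (f \<omega>) (q \<omega>)) \<in> borel_measurable M" using iq by auto
    show ?thesis
    proof (rule integral_dominated_convergence[where w="\<lambda>\<omega>. norm (inner (f \<omega>) (q \<omega>))"])
      show "integrable M (\<lambda>\<omega>. norm (inner (f \<omega>) (q \<omega>)))" using iq by auto
      show "AE \<omega> in M. (\<lambda>n. indicator (A n) \<omega> * inner (f \<omega>) (q \<omega>)) \<longlonglongrightarrow> inner (f \<omega>) (q \<omega>)"
      proof (rule AE_I2)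
        fix \<omega> assume \<omega>: "\<omega> \<in> space M"
        obtain N :: nat where N: "norm (f \<omega>) \<le> real N" using real_arch_simple by blast
        have "eventually (\<lambda>n. indicator (A n) \<omega> * inner (f \<omega>) (q \<omega>) = inner (f \<omega>) (q \<omega>)) sequentially"
          unfolding eventually_sequentially
          using N \<omega> by (intro exI[of _ N]) (auto simp: A_def indicator_def)
        then show "(\<lambda>n. indicator (A n) \<omega> * inner (f \<omega>) (q \<omega>)) \<longlonglongrightarrow> inner (f \<omega>) (q \<omega>)"
          by (rule tendsto_eventually)
      qed
      show "AE \<omega> in M. norm (indicator (A n) \<omega> * inner (f \<omega>) (q \<omega>)) \<le> norm (inner (f \<omega>) (q \<omega>))" for n
        by (auto simp: indicator_def)
    qed measurable
  qed
  from lim[OF ig] lim[OF ih] eqn show ?thesis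
    using LIMSEQ_unique by auto
qed

lemma filt_props:
  fixes M :: "'a measure" and x g :: "nat \<Rightarrow> 'a \<Rightarrow> real^'d"
  assumes xm: "\<And>t. t \<ge> 1 \<Longrightarrow> x t \<in> borel_measurable M"
    and gm: "\<And>t. t \<ge> 1 \<Longrightarrow> g t \<in> borel_measurable M"
  shows "subalgebra M (ftrl_filtration M x g t)"
    and "t \<ge> 1 \<Longrightarrow> x t \<in> borel_measurable (ftrl_filtration M x g t)"
proof -
  define Gen where "Gen = ({x s -` A \<inter> space M | s A. s \<in> {1..t} \<and> A \<in> sets borel} \<union>
      {g s -` A \<inter> space M | s A. s \<in> {1..<t} \<and> A \<in> sets borel})"
  have GM: "Gen \<subseteq> sets M"
  proof
    fix S assume "S \<in> Gen"
    then consider s A where "s \<ge> 1" "A \<in> sets borel" "S = x s -` A \<inter> space M"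
      | s A where "s \<ge> 1" "A \<in> sets borel" "S = g s -` A \<inter> space M"
      unfolding Gen_def by auto
    then show "S \<in> sets M"
      by cases (auto intro: measurable_sets[OF xm] measurable_sets[OF gm])
  qed
  hence GP: "Gen \<subseteq> Pow (space M)" using sets.sets_into_space by blast
  have FF: "ftrl_filtration M x g t = sigma (space M) Gen"
    unfolding ftrl_filtration_def Gen_def ..
  have sp: "space (ftrl_filtration M x g t) = space M"
    unfolding FF using GP by (rule space_measure_of)
  have st: "sets (ftrl_filtration M x g t) = sigma_sets (space M) Gen"
    unfolding FF using GP by (rule sets_measure_of)
  show "subalgebra M (ftrl_filtration M x g t)"
    unfolding subalgebra_def sp st using GM by (simp add: sets.sigma_sets_subset)
  assume t: "t \<ge> 1"
  show "x t \<in> borel_measurable (ftrl_filtration M x g t)"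
  proof (rule measurableI)
    show "\<omega> \<in> space (ftrl_filtration M x g t) \<Longrightarrow> x t \<omega> \<in> space borel" for \<omega> by simp
    fix A :: "(real^'d) set" assume "A \<in> sets borel"
    hence "x t -` A \<inter> space M \<in> Gen" unfolding Gen_def using t
      by (intro UnI1 CollectI exI[of _ t] exI[of _ A]) auto
    thus "x t -` A \<inter> space (ftrl_filtration M x g t) \<in> sets (ftrl_filtration M x g t)"
      unfolding sp st by (rule sigma_sets.Basic)
  qed
qed

theorem lemma2:
  fixes M :: "'a measure"
    and F :: "real^'d \<Rightarrow> real" and gradF :: "real^'d \<Rightarrow> real^'d"
    and x g :: "nat \<Rightarrow> 'a \<Rightarrow> real^'d"
    and eta :: "nat \<Rightarrow> 'a \<Rightarrow> real"
    and phi :: "nat \<Rightarrow> 'a \<Rightarrow> real^'d \<Rightarrow> real"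
    and phi1 :: "real^'d \<Rightarrow> real"
    and G :: real
  assumes M: "prob_space M"
    and F_grad: "\<And>y. (F has_derivative (\<lambda>h. inner (gradF y) h)) (at y)"
    and G_pos: "G > 0"
    and x_meas: "\<And>t. t \<ge> 1 \<Longrightarrow> x t \<in> borel_measurable M"
    and g_meas: "\<And>t. t \<ge> 1 \<Longrightarrow> g t \<in> borel_measurable M"
    and g_unbiased: "\<And>t i. t \<ge> 1 \<Longrightarrow>
          AE \<omega> in M. real_cond_exp M (ftrl_filtration M x g t) (\<lambda>\<omega>. g t \<omega> $ i) \<omega>
                       = gradF (x t \<omega>) $ i"
    and g_bounded: "\<And>t. t \<ge> 1 \<Longrightarrow> AE \<omega> in M. norm (g t \<omega>) \<le> G"
    and eta_meas: "\<And>t. t \<ge> 1 \<Longrightarrow> eta t \<in> borel_measurable (ftrl_filtration M x g t)"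
    and eta_nonneg: "\<And>t \<omega>. t \<ge> 1 \<Longrightarrow> \<omega> \<in> space M \<Longrightarrow> eta t \<omega> \<ge> 0"
    and phi_meas: "\<And>t y. t \<ge> 1 \<Longrightarrow>
          (\<lambda>\<omega>. phi t \<omega> y) \<in> borel_measurable (ftrl_filtration M x g t)"
    and phi1_det: "\<And>\<omega>. \<omega> \<in> space M \<Longrightarrow> phi 1 \<omega> = phi1"
    and phi_convex: "\<And>t \<omega>. t \<ge> 1 \<Longrightarrow> \<omega> \<in> space M \<Longrightarrow> convex_on UNIV (phi t \<omega>)"
    and phi_diff: "\<And>t \<omega> y. t \<ge> 1 \<Longrightarrow> \<omega> \<in> space M \<Longrightarrow> phi t \<omega> differentiable (at y)"
    and x_argmin: "\<And>t \<omega> y. t \<ge> 1 \<Longrightarrow> \<omega> \<in> space M \<Longrightarrow>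
          ftrl_H phi eta g t \<omega> (x t \<omega>) \<le> ftrl_H phi eta g t \<omega> y"
    and phi1_min: "\<exists>z. \<forall>y. phi1 z \<le> phi1 y"
    and int_breg: "\<And>t u. t \<ge> 1 \<Longrightarrow> integrable M (\<lambda>\<omega>. bregman (phi t \<omega>) u (x t \<omega>))"
    and int_phi: "\<And>t u. t \<ge> 1 \<Longrightarrow> integrable M (\<lambda>\<omega>. phi t \<omega> u)"
    and int_gradF: "\<And>t u. t \<ge> 1 \<Longrightarrow>
          integrable M (\<lambda>\<omega>. eta t \<omega> * inner (gradF (x t \<omega>)) (x t \<omega> - u))"
    and int_g: "\<And>t u. t \<ge> 1 \<Longrightarrow>
          integrable M (\<lambda>\<omega>. eta t \<omega> * inner (g t \<omega>) (x t \<omega> - u))"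
    and stab: "\<And>t \<omega>. t \<ge> 1 \<Longrightarrow> \<omega> \<in> space M \<Longrightarrow>
          ftrl_H phi eta g t \<omega> (x t \<omega>) - ftrl_H phi eta g (t + 1) \<omega> (x (t + 1) \<omega>)
            + inner (eta t \<omega> *\<^sub>R g t \<omega>) (x t \<omega>) \<le> 0"
  shows "\<forall>(T::nat) u.
     (integral\<^sup>L M (\<lambda>\<omega>. bregman (phi (T + 1) \<omega>) u (x (T + 1) \<omega>))
       + (\<Sum>t\<in>{1..T}. integral\<^sup>L M (\<lambda>\<omega>. eta t \<omega> * inner (gradF (x t \<omega>)) (x t \<omega> - u)))
       \<le> integral\<^sup>L M (\<lambda>\<omega>. phi (T + 1) \<omega> u) - (INF y. phi1 y))
   \<and> (\<Sum>t\<in>{1..T}. integral\<^sup>L M (\<lambda>\<omega>. eta t \<omega> * inner (gradF (x t \<omega>)) (x t \<omega> - u)))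
       \<le> integral\<^sup>L M (\<lambda>\<omega>. phi (T + 1) \<omega> u) - (INF y. phi1 y)
   \<and> (\<forall>xs. (\<forall>y. inner (gradF y) (y - xs) \<ge> 0) \<longrightarrow>
       integral\<^sup>L M (\<lambda>\<omega>. bregman (phi (T + 1) \<omega>) xs (x (T + 1) \<omega>))
         \<le> integral\<^sup>L M (\<lambda>\<omega>. phi (T + 1) \<omega> xs) - (INF y. phi1 y))"
proof (intro allI)
  fix T :: nat and u :: "real^'d"
  interpret prob_space M by (rule M)
  define m where "m = (INF y. phi1 y)"
  have bdd: "bdd_below (range phi1)" using phi1_min by (auto simp: bdd_below_def)
  define a where "a t \<omega> = ftrl_H phi eta g t \<omega> (x t \<omega>)" for t \<omega>
  have theta0: "ftrl_theta eta g 0 \<omega> = 0" for \<omega> by (simp add: ftrl_theta_def)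
  have Hsuc: "ftrl_H phi eta g (Suc T) \<omega> y = phi (Suc T) \<omega> y - inner (ftrl_theta eta g T \<omega>) y"
    for T \<omega> y by (simp add: ftrl_H_def)
  have a1: "a 1 \<omega> \<ge> m" if "\<omega> \<in> space M" for \<omega>
  proof -
    have "a 1 \<omega> = phi1 (x 1 \<omega>)"
      unfolding a_def ftrl_H_def using phi1_det[OF that] by (simp add: theta0)
    then show ?thesis using cINF_lower[OF bdd, of "x 1 \<omega>"] by (simp add: m_def)
  qed
  have tele: "a 1 \<omega> - a (T + 1) \<omega> + (\<Sum>t\<in>{1..T}. inner (eta t \<omega> *\<^sub>R g t \<omega>) (x t \<omega>)) \<le> 0"
    if \<omega>: "\<omega> \<in> space M" for T \<omega>
  proof (induction T)
    case 0 then show ?case by simp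
  next
    case (Suc T)
    have "a (T + 1) \<omega> - a (T + 1 + 1) \<omega> + inner (eta (T+1) \<omega> *\<^sub>R g (T+1) \<omega>) (x (T+1) \<omega>) \<le> 0"
      using stab[of "T+1" \<omega>] \<omega> by (simp add: a_def)
    with Suc show ?case by simp
  qed
  have path: "bregman (phi (T + 1) \<omega>) u (x (T + 1) \<omega>)
      + (\<Sum>t\<in>{1..T}. eta t \<omega> * inner (g t \<omega>) (x t \<omega> - u)) \<le> phi (T + 1) \<omega> u - m
    \<and> bregman (phi (T + 1) \<omega>) u (x (T + 1) \<omega>) \<ge> 0" if \<omega>: "\<omega> \<in> space M" for \<omega> u
  proof -
    define th where "th = ftrl_theta eta g T \<omega>"
    define p where "p = phi (T+1) \<omega>"
    define y where "y = x (T+1) \<omega>"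
    define D where "D = frechet_derivative p (at y)"
    have pd: "(p has_derivative D) (at y)"
      unfolding D_def p_def using phi_diff[of "T+1" \<omega> y] \<omega> by (simp add: frechet_derivative_works)
    have Hd: "((\<lambda>z. p z - inner th z) has_derivative (\<lambda>h. D h - inner th h)) (at y)"
      by (intro has_derivative_diff pd has_derivative_inner_right has_derivative_ident)
    have Hmin: "\<forall>z\<in>UNIV. p y - inner th y \<le> p z - inner th z"
      using x_argmin[of "T+1" \<omega>] \<omega> by (simp add: ftrl_H_def p_def y_def th_def)
    have "(\<lambda>h. D h - inner th h) = (\<lambda>v. 0)"
      by (rule differential_zero_maxmin[OF UNIV_I open_UNIV Hd]) (use Hmin in simp_all)
    hence Dth: "D h = inner th h" for h by (metis (no_types) eq_iff_diff_eq_0)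
    have breg: "bregman p u y = (p u - inner th u) - (p y - inner th y)"
      unfolding bregman_def D_def[symmetric] Dth by (simp add: inner_diff_right)
    have thsum: "(\<Sum>t\<in>{1..T}. eta t \<omega> * inner (g t \<omega>) u) = - inner th u"
      by (simp add: th_def ftrl_theta_def inner_sum_left)
    have aT: "a (T+1) \<omega> = p y - inner th y"
      by (simp add: a_def ftrl_H_def p_def y_def th_def)
    have "(\<Sum>t\<in>{1..T}. eta t \<omega> * inner (g t \<omega>) (x t \<omega> - u))
        = (\<Sum>t\<in>{1..T}. inner (eta t \<omega> *\<^sub>R g t \<omega>) (x t \<omega>)) - (\<Sum>t\<in>{1..T}. eta t \<omega> * inner (g t \<omega>) u)"
      by (simp add: inner_diff_right right_diff_distrib sum_subtractf)
    moreover have "p y - inner th y \<le> p u - inner th u" using Hmin by blast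
    ultimately show ?thesis using tele[OF \<omega>, of T] a1[OF \<omega>] breg thsum aT
      unfolding p_def[symmetric] y_def[symmetric] by linarith
  qed
  have keyt: "integral\<^sup>L M (\<lambda>\<omega>. eta t \<omega> * inner (g t \<omega>) (x t \<omega> - v))
      = integral\<^sup>L M (\<lambda>\<omega>. eta t \<omega> * inner (gradF (x t \<omega>)) (x t \<omega> - v))"
    if t: "t \<ge> 1" for t v
  proof -
    define FF where "FF = ftrl_filtration M x g t"
    have sub: "subalgebra M FF" unfolding FF_def using filt_props(1)[OF x_meas g_meas] .
    have [measurable]: "x t \<in> borel_measurable FF" unfolding FF_def using filt_props(2)[OF x_meas g_meas t] .
    have [measurable]: "eta t \<in> borel_measurable FF" unfolding FF_def using eta_meas[OF t] .
    have [measurable]: "g t \<in> borel_measurable M" using g_meas[OF t] .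
    have fF: "(\<lambda>\<omega>. eta t \<omega> *\<^sub>R (x t \<omega> - v)) \<in> borel_measurable FF" by measurable
    have e1: "(\<lambda>\<omega>. inner (eta t \<omega> *\<^sub>R (x t \<omega> - v)) (g t \<omega>)) = (\<lambda>\<omega>. eta t \<omega> * inner (g t \<omega>) (x t \<omega> - v))"
      by (simp add: inner_commute)
    have e2: "(\<lambda>\<omega>. inner (eta t \<omega> *\<^sub>R (x t \<omega> - v)) (gradF (x t \<omega>))) = (\<lambda>\<omega>. eta t \<omega> * inner (gradF (x t \<omega>)) (x t \<omega> - v))"
      by (simp add: inner_commute)
    have "integral\<^sup>L M (\<lambda>\<omega>. inner (eta t \<omega> *\<^sub>R (x t \<omega> - v)) (g t \<omega>))
        = integral\<^sup>L M (\<lambda>\<omega>. inner (eta t \<omega> *\<^sub>R (x t \<omega> - v)) (gradF (x t \<omega>)))"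
      apply (rule key_cond[OF M sub fF g_meas[OF t] g_bounded[OF t]])
      subgoal for i using g_unbiased[OF t, of i] unfolding FF_def .
      subgoal unfolding e1 by (rule int_g[OF t])
      subgoal unfolding e2 by (rule int_gradF[OF t])
      done
    then show ?thesis unfolding e1 e2 .
  qed
  have main: "integral\<^sup>L M (\<lambda>\<omega>. bregman (phi (T + 1) \<omega>) v (x (T + 1) \<omega>))
       + (\<Sum>t\<in>{1..T}. integral\<^sup>L M (\<lambda>\<omega>. eta t \<omega> * inner (gradF (x t \<omega>)) (x t \<omega> - v)))
       \<le> integral\<^sup>L M (\<lambda>\<omega>. phi (T + 1) \<omega> v) - m"
    and bnn: "integral\<^sup>L M (\<lambda>\<omega>. bregman (phi (T + 1) \<omega>) v (x (T + 1) \<omega>)) \<ge> 0" for v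
  proof -
    have ib: "integrable M (\<lambda>\<omega>. bregman (phi (T + 1) \<omega>) v (x (T + 1) \<omega>))" by (rule int_breg) simp
    have isum: "integrable M (\<lambda>\<omega>. \<Sum>t\<in>{1..T}. eta t \<omega> * inner (g t \<omega>) (x t \<omega> - v))"
      by (rule Bochner_Integration.integrable_sum) (rule int_g, simp)
    have ip: "integrable M (\<lambda>\<omega>. phi (T + 1) \<omega> v)" by (rule int_phi) simp
    have "integral\<^sup>L M (\<lambda>\<omega>. bregman (phi (T + 1) \<omega>) v (x (T + 1) \<omega>)
          + (\<Sum>t\<in>{1..T}. eta t \<omega> * inner (g t \<omega>) (x t \<omega> - v)))
        \<le> integral\<^sup>L M (\<lambda>\<omega>. phi (T + 1) \<omega> v - m)"
      using ib isum ip path[of _ v] by (intro integral_mono) auto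
    also have "\<dots> = integral\<^sup>L M (\<lambda>\<omega>. phi (T + 1) \<omega> v) - m"
      using ip by (simp add: Bochner_Integration.integral_diff prob_space)
    also have "integral\<^sup>L M (\<lambda>\<omega>. bregman (phi (T + 1) \<omega>) v (x (T + 1) \<omega>)
          + (\<Sum>t\<in>{1..T}. eta t \<omega> * inner (g t \<omega>) (x t \<omega> - v)))
        = integral\<^sup>L M (\<lambda>\<omega>. bregman (phi (T + 1) \<omega>) v (x (T + 1) \<omega>))
          + (\<Sum>t\<in>{1..T}. integral\<^sup>L M (\<lambda>\<omega>. eta t \<omega> * inner (g t \<omega>) (x t \<omega> - v)))"
      using ib isum by (simp add: Bochner_Integration.integral_add Bochner_Integration.integral_sum int_g)
    also have "(\<Sum>t\<in>{1..T}. integral\<^sup>L M (\<lambda>\<omega>. eta t \<omega> * inner (g t \<omega>) (x t \<omega> - v)))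
        = (\<Sum>t\<in>{1..T}. integral\<^sup>L M (\<lambda>\<omega>. eta t \<omega> * inner (gradF (x t \<omega>)) (x t \<omega> - v)))"
      by (rule sum.cong) (auto intro: keyt)
    finally show "integral\<^sup>L M (\<lambda>\<omega>. bregman (phi (T + 1) \<omega>) v (x (T + 1) \<omega>))
       + (\<Sum>t\<in>{1..T}. integral\<^sup>L M (\<lambda>\<omega>. eta t \<omega> * inner (gradF (x t \<omega>)) (x t \<omega> - v)))
       \<le> integral\<^sup>L M (\<lambda>\<omega>. phi (T + 1) \<omega> v) - m" .
    show "integral\<^sup>L M (\<lambda>\<omega>. bregman (phi (T + 1) \<omega>) v (x (T + 1) \<omega>)) \<ge> 0"
      using path[of _ v] by (intro integral_nonneg_AE AE_I2) auto
  qed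
  have snn: "(\<Sum>t\<in>{1..T}. integral\<^sup>L M (\<lambda>\<omega>. eta t \<omega> * inner (gradF (x t \<omega>)) (x t \<omega> - v))) \<ge> 0"
    if "\<forall>y. inner (gradF y) (y - v) \<ge> 0" for v
    using that eta_nonneg
    by (intro sum_nonneg integral_nonneg_AE AE_I2 mult_nonneg_nonneg) auto
  show "(integral\<^sup>L M (\<lambda>\<omega>. bregman (phi (T + 1) \<omega>) u (x (T + 1) \<omega>))
       + (\<Sum>t\<in>{1..T}. integral\<^sup>L M (\<lambda>\<omega>. eta t \<omega> * inner (gradF (x t \<omega>)) (x t \<omega> - u)))
       \<le> integral\<^sup>L M (\<lambda>\<omega>. phi (T + 1) \<omega> u) - (INF y. phi1 y))
   \<and> (\<Sum>t\<in>{1..T}. integral\<^sup>L M (\<lambda>\<omega>. eta t \<omega> * inner (gradF (x t \<omega>)) (x t \<omega> - u)))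
       \<le> integral\<^sup>L M (\<lambda>\<omega>. phi (T + 1) \<omega> u) - (INF y. phi1 y)
   \<and> (\<forall>xs. (\<forall>y. inner (gradF y) (y - xs) \<ge> 0) \<longrightarrow>
       integral\<^sup>L M (\<lambda>\<omega>. bregman (phi (T + 1) \<omega>) xs (x (T + 1) \<omega>))
         \<le> integral\<^sup>L M (\<lambda>\<omega>. phi (T + 1) \<omega> xs) - (INF y. phi1 y))"
    unfolding m_def[symmetric]
    using main[of u] bnn[of u] main snn by (smt (verit))
qed

end
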